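(* Let $R$ be a commutative unital ring such that every proper quotient of $R/\operatorname{Jac}(R)$ has Bass stable rank $1$, where $\operatorname{Jac}(R)$ denotes the Jacobson radical of $R$ (the intersection of all maximal ideals of $R$). Then $\operatorname{sr}(R) \le 2$.
   Context: Rings are commutative and unital. A row $(r_1,\dots,r_n)\in R^n$ is unimodular if $\sum_i R r_i = R$; $\operatorname{Um}_n(R)$ denotes the set of unimodular rows of size $n$. A row $(r_1,\dots,r_{n+1})\in\operatorname{Um}_{n+1}(R)$ ($n>0$) is stable if there are $s_1,\dots,s_n\in R$ with $(r_1+s_1r_{n+1},\dots,r_n+s_nr_{n+1})\in\operatorname{Um}_n(R)$. An integer $n>0$ lies in the stable range of $R$ if every row in $\operatorname{Um}_{n+1}(R)$ is stable, and the Bass stable rank $\operatorname{sr}(R)$ is the least integer in the stable range of $R$. *)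

theory Defs
  imports "HOL-Algebra.QuotRing" "HOL-Library.Extended_Nat"
begin

text \<open>Rows of size n are functions r :: nat => 'a, using the entries r 0, ..., r (n-1).\<close>

definition row :: "('a,'b) ring_scheme \<Rightarrow> nat \<Rightarrow> (nat \<Rightarrow> 'a) \<Rightarrow> bool" where
  "row R n r \<longleftrightarrow> (\<forall>i<n. r i \<in> carrier R)"

definition unimodular :: "('a,'b) ring_scheme \<Rightarrow> nat \<Rightarrow> (nat \<Rightarrow> 'a) \<Rightarrow> bool" where
  "unimodular R n r \<longleftrightarrow> row R n r \<and>
     (\<exists>a. (\<forall>i<n. a i \<in> carrier R) \<and>
          finsum R (\<lambda>i. a i \<otimes>\<^bsub>R\<^esub> r i) {..<n} = \<one>\<^bsub>R\<^esub>)"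

definition stable_row :: "('a,'b) ring_scheme \<Rightarrow> nat \<Rightarrow> (nat \<Rightarrow> 'a) \<Rightarrow> bool" where
  "stable_row R n r \<longleftrightarrow> (\<exists>s. (\<forall>i<n. s i \<in> carrier R) \<and>
      unimodular R n (\<lambda>i. r i \<oplus>\<^bsub>R\<^esub> s i \<otimes>\<^bsub>R\<^esub> r n))"

definition in_stable_range :: "('a,'b) ring_scheme \<Rightarrow> nat \<Rightarrow> bool" where
  "in_stable_range R n \<longleftrightarrow> n > 0 \<and>
     (\<forall>r. unimodular R (Suc n) r \<longrightarrow> stable_row R n r)"

definition stable_rank :: "('a,'b) ring_scheme \<Rightarrow> enat" where
  "stable_rank R = (if \<exists>n. in_stable_range R n
                    then enat (LEAST n. in_stable_range R n) else \<infinity>)"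

definition jacobson :: "('a,'b) ring_scheme \<Rightarrow> 'a set" where
  "jacobson R = carrier R \<inter> \<Inter> {I. maximalideal I R}"

end

theory Submission
  imports Defs "HOL-Algebra.Ring_Divisibility"
begin


lemma (in cring) krull:
  assumes "ideal I R" "\<one> \<notin> I"
  shows "\<exists>M. maximalideal M R \<and> I \<subseteq> M"
proof -
  define S where "S = {J. ideal J R \<and> I \<subseteq> J \<and> \<one> \<notin> J}"
  have "\<exists>M\<in>S. \<forall>X\<in>S. M \<subseteq> X \<longrightarrow> X = M"
  proof (rule subset_Zorn)
    fix C assume C: "subset.chain S C"
    show "\<exists>U\<in>S. \<forall>X\<in>C. X \<subseteq> U"
    proof (cases "C = {}")
      case True then show ?thesis using assms by (auto simp: S_def)
    next
      case False
      have ch: "subset.chain {J. ideal J R} C" using C unfolding pred_on.chain_def S_def by auto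
      have "ideal (\<Union>C) R" using chain_Union_is_ideal[OF ch] False by simp
      moreover have "I \<subseteq> \<Union>C" using False C unfolding pred_on.chain_def S_def by blast
      moreover have "\<one> \<notin> \<Union>C" using C unfolding pred_on.chain_def S_def by auto
      ultimately show ?thesis unfolding S_def by auto
    qed
  qed
  then obtain M where M: "M \<in> S" "\<And>X. X \<in> S \<Longrightarrow> M \<subseteq> X \<Longrightarrow> X = M" by blast
  have "maximalideal M R"
  proof (rule maximalidealI)
    show "ideal M R" using M by (auto simp: S_def)
    show "carrier R \<noteq> M" using M by (auto simp: S_def)
    fix J assume J: "ideal J R" "M \<subseteq> J" "J \<subseteq> carrier R"
    show "J = M \<or> J = carrier R"
    proof (cases "\<one> \<in> J")
      case True then show ?thesis using ideal.one_imp_carrier[OF J(1)] by blast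
    next
      case False then have "J \<in> S" using J M by (auto simp: S_def)
      then show ?thesis using M J by blast
    qed
  qed
  then show ?thesis using M by (auto simp: S_def)
qed

lemma (in cring) jacobson_ideal: "ideal (jacobson R) R"
proof (cases "{I. maximalideal I R} = {}")
  case True then show ?thesis by (simp add: jacobson_def oneideal)
next
  case False
  have mi: "\<And>I. I \<in> {I. maximalideal I R} \<Longrightarrow> ideal I R"
    by (simp add: maximalideal.axioms(1))
  have id: "ideal (\<Inter>{I. maximalideal I R}) R"
    by (rule i_Intersect[OF mi False])
  obtain M where M: "maximalideal M R" using False by blast
  have "\<Inter>{I. maximalideal I R} \<subseteq> M" using M by (rule Inter_lower[OF CollectI])
  also have "M \<subseteq> carrier R" using mi[of M] M by (simp add: ideal.Icarr subsetI)
  finally have "carrier R \<inter> \<Inter>{I. maximalideal I R} = \<Inter>{I. maximalideal I R}" by blast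
  then show ?thesis unfolding jacobson_def using id by simp
qed

lemma (in cring) jacobson_unit:
  assumes "j \<in> jacobson R"
  shows "\<one> \<oplus> j \<in> Units R"
proof (rule ccontr)
  assume nu: "\<one> \<oplus> j \<notin> Units R"
  have jc: "j \<in> carrier R" using assms by (auto simp: jacobson_def)
  let ?u = "\<one> \<oplus> j"
  have uc: "?u \<in> carrier R" using jc by simp
  have "\<one> \<notin> PIdl ?u"
  proof
    assume "\<one> \<in> PIdl ?u"
    then obtain x where x: "x \<in> carrier R" "\<one> = x \<otimes> ?u" unfolding cgenideal_def by blast
    then have "?u \<in> Units R" using uc unfolding Units_def using m_comm[OF x(1) uc] by auto
    then show False using nu by blast
  qed
  then obtain M where M: "maximalideal M R" "PIdl ?u \<subseteq> M"
    using krull cgenideal_ideal[OF uc] by blast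
  have "?u \<in> M" using M cgenideal_self[OF uc] by blast
  moreover have "j \<in> M" using assms M by (auto simp: jacobson_def)
  then have "\<ominus> \<one> \<otimes> j \<in> M" using M(1) by (simp add: ideal.I_l_closed maximalideal.axioms(1))
  ultimately have "?u \<oplus> \<ominus> \<one> \<otimes> j \<in> M" using M(1)
    by (simp add: additive_subgroup.a_closed ideal.axioms(1) maximalideal.axioms(1))
  moreover have "?u \<oplus> \<ominus> \<one> \<otimes> j = \<one>" using jc
    by (simp add: l_minus a_assoc r_neg)
  ultimately have "\<one> \<in> M" by simp
  then have "M = carrier R" using M(1) ideal.one_imp_carrier maximalideal.axioms(1) by blast
  then show False using M(1) maximalideal.I_notcarr by blast
qed

lemma (in abelian_monoid) finsum_lt1: "(f::nat\<Rightarrow>'a) 0 \<in> carrier G \<Longrightarrow> finsum G f {..<1} = f 0"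
  by (simp add: lessThan_Suc finsum_insert)

lemma (in abelian_monoid) finsum_lt2:
  "(f::nat\<Rightarrow>'a) 0 \<in> carrier G \<Longrightarrow> f 1 \<in> carrier G \<Longrightarrow> finsum G f {..<2} = f 0 \<oplus> f 1"
proof -
  assume a: "f 0 \<in> carrier G" "f 1 \<in> carrier G"
  have e: "{..<2::nat} = insert 1 {0}" by auto
  show ?thesis unfolding e using a by (simp add: finsum_insert add.m_comm)
qed

lemma (in abelian_monoid) finsum_lt3:
  "(f::nat\<Rightarrow>'a) 0 \<in> carrier G \<Longrightarrow> f 1 \<in> carrier G \<Longrightarrow> f 2 \<in> carrier G \<Longrightarrow>
   finsum G f {..<3} = f 0 \<oplus> f 1 \<oplus> f 2"
proof -
  assume a: "f 0 \<in> carrier G" "f 1 \<in> carrier G" "f 2 \<in> carrier G"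
  have e: "{..<3::nat} = insert 2 {..<2}" by auto
  have "finsum G f {..<3} = f 2 \<oplus> finsum G f {..<2}"
    unfolding e using a by (subst finsum_insert) (auto simp: less_2_cases_iff)
  also have "\<dots> = f 0 \<oplus> f 1 \<oplus> f 2" using a by (simp add: finsum_lt2 add.m_comm)
  finally show ?thesis .
qed

lemma quot_carrier_ex:
  fixes R (structure)
  assumes "X \<in> carrier (R Quot I)" shows "\<exists>x\<in>carrier R. X = I +> x"
  using assms by (auto simp: FactRing_def A_RCOSETS_def')

lemma (in cring) close2:
  assumes g: "g 0 \<in> carrier R" "g 1 \<in> carrier R" and ab: "\<alpha> \<in> carrier R" "\<beta> \<in> carrier R"
    and j: "j \<in> jacobson R" and eq: "\<alpha> \<otimes> g 0 \<oplus> \<beta> \<otimes> g 1 = \<one> \<oplus> j"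
  shows "unimodular R 2 g"
proof -
  have jc: "j \<in> carrier R" using j by (auto simp: jacobson_def)
  have u: "\<one> \<oplus> j \<in> Units R" by (rule jacobson_unit[OF j])
  define v where "v = inv (\<one> \<oplus> j)"
  have vc: "v \<in> carrier R" using u v_def by simp
  have vu: "v \<otimes> (\<one> \<oplus> j) = \<one>" using u v_def by simp
  define a where "a = (\<lambda>i::nat. if i = 0 then v \<otimes> \<alpha> else v \<otimes> \<beta>)"
  have "finsum R (\<lambda>i. a i \<otimes> g i) {..<2} = v \<otimes> \<alpha> \<otimes> g 0 \<oplus> v \<otimes> \<beta> \<otimes> g 1"
    using g ab vc by (subst finsum_lt2) (auto simp: a_def)
  also have "\<dots> = v \<otimes> (\<alpha> \<otimes> g 0 \<oplus> \<beta> \<otimes> g 1)" using g ab vc by algebra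
  also have "\<dots> = \<one>" using eq vu by simp
  finally have "finsum R (\<lambda>i. a i \<otimes> g i) {..<2} = \<one>" .
  moreover have "\<forall>i<2. a i \<in> carrier R" using vc ab by (auto simp: a_def)
  moreover have "row R 2 g" using g by (auto simp: row_def less_2_cases_iff)
  ultimately show ?thesis unfolding unimodular_def by blast
qed



lemma (in cring) main_sr2:
  assumes H: "\<forall>I. ideal I (R Quot jacobson R) \<and> I \<noteq> {\<zero>\<^bsub>R Quot jacobson R\<^esub>}
              \<longrightarrow> stable_rank ((R Quot jacobson R) Quot I) = 1"
  shows "in_stable_range R 2"
  unfolding in_stable_range_def
proof (intro conjI allI impI)
  show "0 < (2::nat)" by simp
  fix r assume um: "unimodular R (Suc 2) r"
  have rc: "r 0 \<in> carrier R" "r 1 \<in> carrier R" "r 2 \<in> carrier R"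
    using um by (auto simp: unimodular_def row_def)
  obtain a where ac: "\<forall>i<3. a i \<in> carrier R"
    and asum: "finsum R (\<lambda>i. a i \<otimes> r i) {..<3} = \<one>"
    using um by (auto simp: unimodular_def numeral_3_eq_3)
  have ac': "a 0 \<in> carrier R" "a 1 \<in> carrier R" "a 2 \<in> carrier R" using ac by auto
  have aeq: "a 0 \<otimes> r 0 \<oplus> a 1 \<otimes> r 1 \<oplus> a 2 \<otimes> r 2 = \<one>"
    using asum rc ac' by (subst (asm) finsum_lt3) auto
  define J where "J = jacobson R"
  have JI: "ideal J R" unfolding J_def by (rule jacobson_ideal)
  show "stable_row R 2 r"
  proof (cases "r 1 \<in> J")
    case True
    define s where "s = (\<lambda>i::nat. if i = 0 then \<zero> else \<one>)"
    have "unimodular R 2 (\<lambda>i. r i \<oplus> s i \<otimes> r 2)"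
    proof (rule close2[where \<alpha> = "a 0" and \<beta> = "a 2" and j = "(a 2 \<ominus> a 1) \<otimes> r 1"])
      show "r 0 \<oplus> s 0 \<otimes> r 2 \<in> carrier R" "r 1 \<oplus> s 1 \<otimes> r 2 \<in> carrier R"
        using rc by (auto simp: s_def)
      show "a 0 \<in> carrier R" "a 2 \<in> carrier R" using ac' by auto
      show "(a 2 \<ominus> a 1) \<otimes> r 1 \<in> jacobson R"
        using True JI ac' unfolding J_def by (intro ideal.I_l_closed) auto
      have "a 0 \<otimes> (r 0 \<oplus> s 0 \<otimes> r 2) \<oplus> a 2 \<otimes> (r 1 \<oplus> s 1 \<otimes> r 2)
          = (a 0 \<otimes> r 0 \<oplus> a 1 \<otimes> r 1 \<oplus> a 2 \<otimes> r 2) \<oplus> (a 2 \<ominus> a 1) \<otimes> r 1"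
        using rc ac' unfolding s_def by simp algebra
      then show "a 0 \<otimes> (r 0 \<oplus> s 0 \<otimes> r 2) \<oplus> a 2 \<otimes> (r 1 \<oplus> s 1 \<otimes> r 2)
          = \<one> \<oplus> (a 2 \<ominus> a 1) \<otimes> r 1" using aeq by simp
    qed
    moreover have "\<forall>i<2. s i \<in> carrier R" by (simp add: s_def)
    ultimately show ?thesis unfolding stable_row_def by blast
  next
    case False
    define S where "S = R Quot J"
    have Sc: "cring S" unfolding S_def by (rule ideal.quotient_is_cring[OF JI is_cring])
    then interpret S: cring S .
    define b where "b = J +> r 1"
    have bc: "b \<in> carrier S" using rc JI unfolding b_def S_def
      by (simp add: FactRing_def a_rcosetsI ideal.Icarr subsetI)
    define I where "I = PIdl\<^bsub>S\<^esub> b"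
    have II: "ideal I S" unfolding I_def by (rule S.cgenideal_ideal[OF bc])
    have bI: "b \<in> I" unfolding I_def by (rule S.cgenideal_self[OF bc])
    have Inz: "I \<noteq> {\<zero>\<^bsub>S\<^esub>}"
    proof
      assume "I = {\<zero>\<^bsub>S\<^esub>}"
      then have "J +> r 1 = J" using bI unfolding b_def S_def by (simp add: FactRing_def)
      then have "r 1 \<in> J" using ideal.rcos_const_imp_mem[OF JI rc(2)] by simp
      then show False using False by simp
    qed
    define T where "T = S Quot I"
    have Tr: "ring T" unfolding T_def by (rule ideal.quotient_is_ring[OF II])
    interpret T: ring T by (rule Tr)
    define \<phi> where "\<phi> = (\<lambda>z. I +>\<^bsub>S\<^esub> (J +> z))"
    have hom: "\<phi> \<in> ring_hom R T"
    proof -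
      have h1: "(\<lambda>z. J +> z) \<in> ring_hom R S"
        unfolding S_def by (rule ideal.rcos_ring_hom[OF JI])
      have h2: "(\<lambda>y. I +>\<^bsub>S\<^esub> y) \<in> ring_hom S T"
        unfolding T_def by (rule ideal.rcos_ring_hom[OF II])
      have "(\<lambda>y. I +>\<^bsub>S\<^esub> y) \<circ> (\<lambda>z. J +> z) \<in> ring_hom R T"
        by (rule ring_hom_trans[OF h1 h2])
      then show ?thesis unfolding \<phi>_def comp_def .
    qed
    have surj: "\<exists>z\<in>carrier R. X = \<phi> z" if XT: "X \<in> carrier T" for X
    proof -
      obtain y where y: "y \<in> carrier S" "X = I +>\<^bsub>S\<^esub> y"
        using quot_carrier_ex[OF XT[unfolded T_def]] by blast
      obtain z where z: "z \<in> carrier R" "y = J +> z"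
        using quot_carrier_ex[OF y(1)[unfolded S_def]] by blast
      show ?thesis using y z unfolding \<phi>_def by blast
    qed
    have ker: "\<exists>q\<in>carrier R. z \<ominus> q \<otimes> r 1 \<in> J" if z: "z \<in> carrier R" "\<phi> z = \<zero>\<^bsub>T\<^esub>" for z
    proof -
      have zS: "J +> z \<in> carrier S" using z JI unfolding S_def
        by (simp add: FactRing_def a_rcosetsI ideal.Icarr subsetI)
      have "I +>\<^bsub>S\<^esub> (J +> z) = I" using z(2) unfolding \<phi>_def T_def by (simp add: FactRing_def)
      then have "J +> z \<in> I" using ideal.rcos_const_imp_mem[OF II zS] by simp
      then obtain x where x: "x \<in> carrier S" "J +> z = x \<otimes>\<^bsub>S\<^esub> b"
        unfolding I_def cgenideal_def by blast
      obtain q where q: "q \<in> carrier R" "x = J +> q"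
        using quot_carrier_ex[OF x(1)[unfolded S_def]] by blast
      have "x \<otimes>\<^bsub>S\<^esub> b = J +> (q \<otimes> r 1)"
        using q rc unfolding b_def S_def by (simp add: FactRing_def ideal.rcoset_mult_add[OF JI])
      then have "J +> z = J +> (q \<otimes> r 1)" using x by simp
      then have "z \<ominus> q \<otimes> r 1 \<in> J"
        using quotient_eq_iff_same_a_r_cos[OF JI z(1)] q rc by simp
      then show ?thesis using q by blast
    qed
    have \<phi>c: "\<phi> z \<in> carrier T" if "z \<in> carrier R" for z using hom that by (rule ring_hom_closed)
    have \<phi>add: "\<phi> (x \<oplus> y) = \<phi> x \<oplus>\<^bsub>T\<^esub> \<phi> y" if "x \<in> carrier R" "y \<in> carrier R" for x y
      using hom that by (rule ring_hom_add)
    have \<phi>mult: "\<phi> (x \<otimes> y) = \<phi> x \<otimes>\<^bsub>T\<^esub> \<phi> y" if "x \<in> carrier R" "y \<in> carrier R" for x y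
      using hom that by (rule ring_hom_mult)
    have \<phi>one: "\<phi> \<one> = \<one>\<^bsub>T\<^esub>" using hom by (rule ring_hom_one)
    have \<phi>zero: "\<phi> \<zero> = \<zero>\<^bsub>T\<^esub>" using ring_hom_zero[OF hom ring_axioms Tr] .
    have \<phi>b: "\<phi> (r 1) = \<zero>\<^bsub>T\<^esub>"
      using S.a_rcos_zero[OF II bI] unfolding \<phi>_def b_def T_def by (simp add: FactRing_def)
    have sr1: "stable_rank T = 1" using H II Inz unfolding T_def S_def J_def by blast
    then have ex: "\<exists>n. in_stable_range T n" unfolding stable_rank_def by (auto split: if_splits)
    then have "(LEAST n. in_stable_range T n) = 1" using sr1 unfolding stable_rank_def
      by (simp add: one_enat_def)
    then have isr: "in_stable_range T 1" using LeastI_ex[OF ex] by simp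
    define r' where "r' = (\<lambda>i::nat. if i = 0 then \<phi> (r 0) else \<phi> (r 2))"
    have "unimodular T 2 r'"
    proof -
      define a' where "a' = (\<lambda>i::nat. if i = 0 then \<phi> (a 0) else \<phi> (a 2))"
      have "finsum T (\<lambda>i. a' i \<otimes>\<^bsub>T\<^esub> r' i) {..<2} = \<phi> (a 0) \<otimes>\<^bsub>T\<^esub> \<phi> (r 0) \<oplus>\<^bsub>T\<^esub> \<phi> (a 2) \<otimes>\<^bsub>T\<^esub> \<phi> (r 2)"
        using rc ac' \<phi>c by (subst T.finsum_lt2) (auto simp: a'_def r'_def)
      also have "\<dots> = \<phi> (a 0 \<otimes> r 0 \<oplus> a 2 \<otimes> r 2)" using rc ac' by (simp add: \<phi>add \<phi>mult)
      also have "a 0 \<otimes> r 0 \<oplus> a 2 \<otimes> r 2 = \<one> \<oplus> (\<ominus> a 1) \<otimes> r 1"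
      proof -
        have "a 0 \<otimes> r 0 \<oplus> a 2 \<otimes> r 2 = (a 0 \<otimes> r 0 \<oplus> a 1 \<otimes> r 1 \<oplus> a 2 \<otimes> r 2) \<oplus> (\<ominus> a 1) \<otimes> r 1"
          using rc ac' by algebra
        then show ?thesis using aeq by simp
      qed
      also have "\<phi> (\<one> \<oplus> (\<ominus> a 1) \<otimes> r 1) = \<one>\<^bsub>T\<^esub>"
        using rc ac' \<phi>c by (simp add: \<phi>add \<phi>mult \<phi>one \<phi>b[simplified])
      finally have "finsum T (\<lambda>i. a' i \<otimes>\<^bsub>T\<^esub> r' i) {..<2} = \<one>\<^bsub>T\<^esub>" .
      moreover have "\<forall>i<2. a' i \<in> carrier T" using ac' \<phi>c by (auto simp: a'_def)
      moreover have "row T 2 r'" using rc \<phi>c by (auto simp: r'_def row_def)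
      ultimately show ?thesis unfolding unimodular_def by blast
    qed
    then have "unimodular T (Suc 1) r'" by (simp add: numeral_2_eq_2)
    then have "stable_row T 1 r'" using isr unfolding in_stable_range_def by blast
    then obtain s' where s': "s' 0 \<in> carrier T"
      "unimodular T 1 (\<lambda>i. r' i \<oplus>\<^bsub>T\<^esub> s' i \<otimes>\<^bsub>T\<^esub> r' 1)"
      unfolding stable_row_def by auto
    then obtain x' where x': "x' 0 \<in> carrier T"
      "finsum T (\<lambda>i. x' i \<otimes>\<^bsub>T\<^esub> (r' i \<oplus>\<^bsub>T\<^esub> s' i \<otimes>\<^bsub>T\<^esub> r' 1)) {..<1} = \<one>\<^bsub>T\<^esub>"
      unfolding unimodular_def by auto
    obtain \<sigma> where \<sigma>: "\<sigma> \<in> carrier R" "s' 0 = \<phi> \<sigma>" using surj s'(1) by blast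
    obtain x where x: "x \<in> carrier R" "x' 0 = \<phi> x" using surj x'(1) by blast
    define w where "w = x \<otimes> (r 0 \<oplus> \<sigma> \<otimes> r 2)"
    have wc: "w \<in> carrier R" using x \<sigma> rc by (simp add: w_def)
    have "\<phi> w = \<one>\<^bsub>T\<^esub>"
    proof -
      have "finsum T (\<lambda>i. x' i \<otimes>\<^bsub>T\<^esub> (r' i \<oplus>\<^bsub>T\<^esub> s' i \<otimes>\<^bsub>T\<^esub> r' 1)) {..<1}
          = x' 0 \<otimes>\<^bsub>T\<^esub> (r' 0 \<oplus>\<^bsub>T\<^esub> s' 0 \<otimes>\<^bsub>T\<^esub> r' 1)"
        using x \<sigma> rc \<phi>c by (subst T.finsum_lt1) (auto simp: r'_def)
      also have "\<dots> = \<phi> w" using x \<sigma> rc by (simp add: r'_def w_def \<phi>add \<phi>mult)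
      finally show ?thesis using x'(2) by simp
    qed
    then have "\<phi> (w \<oplus> \<ominus> \<one>) = \<zero>\<^bsub>T\<^esub>"
    proof -
      assume "\<phi> w = \<one>\<^bsub>T\<^esub>"
      then have "\<phi> (w \<oplus> \<ominus> \<one>) = \<phi> \<one> \<oplus>\<^bsub>T\<^esub> \<phi> (\<ominus> \<one>)" using wc by (simp add: \<phi>add \<phi>one)
      also have "\<dots> = \<phi> (\<one> \<oplus> \<ominus> \<one>)" by (simp add: \<phi>add)
      also have "\<dots> = \<zero>\<^bsub>T\<^esub>" using \<phi>zero by (simp add: r_neg)
      finally show ?thesis .
    qed
    then have "\<exists>q\<in>carrier R. (w \<oplus> \<ominus> \<one>) \<ominus> q \<otimes> r 1 \<in> J"
      using wc by (intro ker) simp_all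
    then obtain q where q: "q \<in> carrier R" "(w \<oplus> \<ominus> \<one>) \<ominus> q \<otimes> r 1 \<in> J"
      by blast
    define s where "s = (\<lambda>i::nat. if i = 0 then \<sigma> else \<zero>)"
    have "unimodular R 2 (\<lambda>i. r i \<oplus> s i \<otimes> r 2)"
    proof (rule close2[where \<alpha> = x and \<beta> = "\<ominus> q" and j = "(w \<oplus> \<ominus> \<one>) \<ominus> q \<otimes> r 1"])
      show "r 0 \<oplus> s 0 \<otimes> r 2 \<in> carrier R" "r 1 \<oplus> s 1 \<otimes> r 2 \<in> carrier R"
        using rc \<sigma> by (auto simp: s_def)
      show "x \<in> carrier R" "\<ominus> q \<in> carrier R" using x q by auto
      show "(w \<oplus> \<ominus> \<one>) \<ominus> q \<otimes> r 1 \<in> jacobson R" using q J_def by simp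
      show "x \<otimes> (r 0 \<oplus> s 0 \<otimes> r 2) \<oplus> \<ominus> q \<otimes> (r 1 \<oplus> s 1 \<otimes> r 2)
          = \<one> \<oplus> ((w \<oplus> \<ominus> \<one>) \<ominus> q \<otimes> r 1)"
        using rc x q \<sigma> unfolding s_def w_def by simp algebra
    qed
    moreover have "\<forall>i<2. s i \<in> carrier R" using \<sigma> by (simp add: s_def)
    ultimately show ?thesis unfolding stable_row_def by blast
  qed
qed


theorem mainTheorem5:
  fixes R :: "('a, 'b) ring_scheme"
  assumes "cring R"
    and "\<forall>I. ideal I (R Quot jacobson R) \<and> I \<noteq> {\<zero>\<^bsub>R Quot jacobson R\<^esub>}
              \<longrightarrow> stable_rank ((R Quot jacobson R) Quot I) = 1"
  shows "stable_rank R \<le> 2"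
proof -
  interpret cring R by fact
  have sr: "in_stable_range R 2" by (rule main_sr2[OF assms(2)])
  then have ex: "\<exists>n. in_stable_range R n" by blast
  have le: "(LEAST n. in_stable_range R n) \<le> 2" using sr by (rule Least_le)
  have "stable_rank R = enat (LEAST n. in_stable_range R n)"
    unfolding stable_rank_def using ex by simp
  also have "\<dots> \<le> enat 2" using le by simp
  also have "enat 2 = 2" by (simp add: numeral_eq_enat)
  finally show ?thesis .
qed

end
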